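(* If $S\in\Delta^2_n$, then $$E(S)=\frac{1}{\pi}\int_{-\infty}^{\infty}\frac{1}{z^2}\log\Big|1+\sum_{j=1}^{\lfloor n/2\rfloor}(-1)^j c_{2j}(S)\,z^{2j}\Big|\,dz .$$
   Context: A sidigraph is a digraph (no loops, at most one arc from $u$ to $v$) with a sign $\sigma(a)\in\{-1,1\}$ on each arc; its adjacency matrix $A(S)$ has entry $\sigma(v_i,v_j)$ if there is an arc from $v_i$ to $v_j$ and $0$ otherwise, and $\phi_S(z)=\det(zI-A(S))$. The energy of a sidigraph $S$ with eigenvalues $z_1,\dots,z_n$ is $E(S)=\sum_{j=1}^n|\Re z_j|$. The sign of a directed cycle is the product of its arc signs. $\Delta^2_n$ is the class of sidigraphs on $n$ vertices whose underlying digraph is bipartite and in which every directed cycle is negative. $c_{2j}(S)$ is the number of linear subsidigraphs of $S$ of order $2j$ (subsidigraphs on $2j$ vertices in which every vertex has indegree and outdegree $1$); for $S\in\Delta^2_n$ one has $\phi_S(z)=z^n+\sum_{j=1}^{\lfloor n/2\rfloor}c_{2j}(S)z^{n-2j}$. The integral is understood as a principal value. *)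

theory Defs
  imports "HOL-Analysis.Analysis" "Jordan_Normal_Form.Char_Poly" "HOL-Combinatorics.Permutations"
begin

definition sidigraph :: "nat \<Rightarrow> (nat \<Rightarrow> nat \<Rightarrow> bool) \<Rightarrow> (nat \<Rightarrow> nat \<Rightarrow> int) \<Rightarrow> bool" where
  "sidigraph n Ar \<sigma> \<longleftrightarrow>
     (\<forall>u v. Ar u v \<longrightarrow> u < n \<and> v < n \<and> u \<noteq> v \<and> (\<sigma> u v = 1 \<or> \<sigma> u v = -1))"

definition adj_matrix :: "nat \<Rightarrow> (nat \<Rightarrow> nat \<Rightarrow> bool) \<Rightarrow> (nat \<Rightarrow> nat \<Rightarrow> int) \<Rightarrow> complex mat" where
  "adj_matrix n Ar \<sigma> = mat n n (\<lambda>(i, j). if Ar i j then of_int (\<sigma> i j) else 0)"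

definition sidi_energy :: "nat \<Rightarrow> (nat \<Rightarrow> nat \<Rightarrow> bool) \<Rightarrow> (nat \<Rightarrow> nat \<Rightarrow> int) \<Rightarrow> real" where
  "sidi_energy n Ar \<sigma> =
     sum_mset (image_mset (\<lambda>z. \<bar>Re z\<bar>) (proots (char_poly (adj_matrix n Ar \<sigma>))))"

definition directed_cycle :: "nat \<Rightarrow> (nat \<Rightarrow> nat \<Rightarrow> bool) \<Rightarrow> nat list \<Rightarrow> bool" where
  "directed_cycle n Ar vs \<longleftrightarrow> length vs \<ge> 2 \<and> distinct vs \<and> set vs \<subseteq> {0..<n} \<and>
     (\<forall>i < length vs. Ar (vs ! i) (vs ! ((i + 1) mod length vs)))"

definition cycle_sign :: "(nat \<Rightarrow> nat \<Rightarrow> int) \<Rightarrow> nat list \<Rightarrow> int" where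
  "cycle_sign \<sigma> vs = (\<Prod>i < length vs. \<sigma> (vs ! i) (vs ! ((i + 1) mod length vs)))"

definition bipartite_underlying :: "nat \<Rightarrow> (nat \<Rightarrow> nat \<Rightarrow> bool) \<Rightarrow> bool" where
  "bipartite_underlying n Ar \<longleftrightarrow>
     (\<exists>X \<subseteq> {0..<n}. \<forall>u v. Ar u v \<longrightarrow> (u \<in> X \<longleftrightarrow> v \<notin> X))"

definition Delta2 :: "nat \<Rightarrow> (nat \<Rightarrow> nat \<Rightarrow> bool) \<Rightarrow> (nat \<Rightarrow> nat \<Rightarrow> int) \<Rightarrow> bool" where
  "Delta2 n Ar \<sigma> \<longleftrightarrow> sidigraph n Ar \<sigma> \<and> bipartite_underlying n Ar \<and>
     (\<forall>vs. directed_cycle n Ar vs \<longrightarrow> cycle_sign \<sigma> vs = -1)"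

text \<open>Number of linear subsidigraphs of order k: a vertex set U with card U = k together with
  a choice of arcs giving every vertex of U in- and outdegree 1 inside U, i.e. a permutation
  f of U with an Ar from u to f u for each u in U.\<close>
definition num_linear :: "nat \<Rightarrow> (nat \<Rightarrow> nat \<Rightarrow> bool) \<Rightarrow> nat \<Rightarrow> nat" where
  "num_linear n Ar k = card {(U, f). U \<subseteq> {0..<n} \<and> card U = k \<and> f permutes U \<and>
                                       (\<forall>u \<in> U. Ar u (f u))}"

end

theory Submission
  imports Defs "HOL-Combinatorics.Cycles" "HOL-Real_Asymp.Real_Asymp"
begin


lemma sign_cycle_of_list:
  "distinct cs \<Longrightarrow> sign (cycle_of_list cs) = (-1::int) ^ (length cs - 1)"
proof (induction cs rule: cycle_of_list.induct)
  case (1 i j cs)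
  have "sign (cycle_of_list (i # j # cs)) = sign (Transposition.transpose i j) * sign (cycle_of_list (j # cs))"
    by (simp add: sign_compose permutation_swap_id permutation_of_cycle)
  also have "\<dots> = - ((-1) ^ (length cs))" using 1 by (simp add: sign_swap_id)
  finally have "sign (cycle_of_list (i # j # cs)) = - ((-1) ^ length cs)" .
  thus ?case by (simp del: cycle_of_list.simps)
qed auto

lemma cycle_of_list_nth:
  assumes "distinct cs" "k < length cs"
  shows "cycle_of_list cs (cs ! k) = cs ! ((k + 1) mod length cs)"
proof -
  have "map (cycle_of_list cs) cs = rotate 1 cs"
    using cyclic_rotation[OF assms(1), of 1] by (simp add: id_def o_def)
  hence "map (cycle_of_list cs) cs ! k = rotate 1 cs ! k" by simp
  thus ?thesis using assms by (simp add: nth_rotate1)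
qed

lemma cycle_decomp_permutes: "cycle_decomp I p \<Longrightarrow> p permutes I \<and> finite I"
proof (induction rule: cycle_decomp.induct)
  case empty thus ?case by (auto simp: permutes_def)
next
  case (comp I p cs)
  have 1: "cycle_of_list cs permutes (set cs \<union> I)"
    by (rule permutes_subset[OF cycle_permutes]) auto
  have 2: "p permutes (set cs \<union> I)" 
    by (rule permutes_subset[of p I]) (use comp.IH in auto)
  have "cycle_of_list cs \<circ> p permutes (set cs \<union> I)" by (rule permutes_compose[OF 2 1])
  thus ?case using comp.IH by (simp add: o_def)
qed

lemma decomp_sign:
  assumes "cycle_decomp I p" "Delta2 n Ar \<sigma>" 
  shows "(\<forall>i. p i \<noteq> i \<longrightarrow> Ar i (p i)) \<Longrightarrow>
     sign p * (\<Prod>i\<in>{i\<in>I. p i \<noteq> i}. - \<sigma> i (p i)) = 1"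
  using assms(1)
proof (induction rule: cycle_decomp.induct)
  case empty thus ?case by simp
next
  case (comp I q cs)
  let ?c = "cycle_of_list cs"
  let ?p = "?c \<circ> q"
  have qp: "q permutes I" "finite I" using cycle_decomp_permutes[OF comp.hyps(1)] by auto
  have pc: "?p i = ?c i" if "i \<in> set cs" for i
  proof -
    have "i \<notin> I" using that comp.hyps(3) by blast
    hence "q i = i" using qp permutes_not_in by metis
    thus ?thesis by simp
  qed
  have pq: "?p i = q i" if "i \<notin> set cs" for i
  proof (cases "i \<in> I")
    case True
    hence "q i \<in> I" using qp permutes_in_image by metis
    hence "q i \<notin> set cs" using comp.hyps(3) by blast
    thus ?thesis using id_outside_supp by simp
  next
    case False
    hence "q i = i" using qp permutes_not_in by metis
    thus ?thesis using that id_outside_supp by simp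
  qed
  have prem: "\<forall>i. q i \<noteq> i \<longrightarrow> Ar i (q i)"
  proof (intro allI impI)
    fix i assume "q i \<noteq> i"
    hence "i \<in> I" using qp permutes_not_in by metis
    hence "i \<notin> set cs" using comp.hyps(3) by blast
    thus "Ar i (q i)" using pq comp.prems \<open>q i \<noteq> i\<close> by metis
  qed
  have IH: "sign q * (\<Prod>i\<in>{i\<in>I. q i \<noteq> i}. - \<sigma> i (q i)) = 1"
    using comp.IH prem by blast
  have setsplit: "{i\<in>set cs \<union> I. ?p i \<noteq> i} = {i\<in>set cs. ?c i \<noteq> i} \<union> {i\<in>I. q i \<noteq> i}"
  proof -
    have "x \<in> {i\<in>set cs \<union> I. ?p i \<noteq> i} \<longleftrightarrow> x \<in> {i\<in>set cs. ?c i \<noteq> i} \<union> {i\<in>I. q i \<noteq> i}" for x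
    proof (cases "x \<in> set cs")
      case True
      hence "x \<notin> I" using comp.hyps(3) by blast
      thus ?thesis using pc[OF True] True by auto
    next
      case False
      thus ?thesis using pq[OF False] False by auto
    qed
    thus ?thesis by blast
  qed
  have prodsplit: "(\<Prod>i\<in>{i\<in>set cs \<union> I. ?p i \<noteq> i}. - \<sigma> i (?p i)) =
       (\<Prod>i\<in>{i\<in>set cs. ?c i \<noteq> i}. - \<sigma> i (?c i)) * (\<Prod>i\<in>{i\<in>I. q i \<noteq> i}. - \<sigma> i (q i))"
  proof -
    have "(\<Prod>i\<in>{i\<in>set cs \<union> I. ?p i \<noteq> i}. - \<sigma> i (?p i)) =
       (\<Prod>i\<in>{i\<in>set cs. ?c i \<noteq> i}. - \<sigma> i (?p i)) * (\<Prod>i\<in>{i\<in>I. q i \<noteq> i}. - \<sigma> i (?p i))"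
      unfolding setsplit using qp comp.hyps(3) by (intro prod.union_disjoint) auto
    also have "(\<Prod>i\<in>{i\<in>set cs. ?c i \<noteq> i}. - \<sigma> i (?p i)) = (\<Prod>i\<in>{i\<in>set cs. ?c i \<noteq> i}. - \<sigma> i (?c i))"
      using pc by (intro prod.cong) auto
    also have "(\<Prod>i\<in>{i\<in>I. q i \<noteq> i}. - \<sigma> i (?p i)) = (\<Prod>i\<in>{i\<in>I. q i \<noteq> i}. - \<sigma> i (q i))"
    proof (intro prod.cong refl)
      fix x assume "x \<in> {i\<in>I. q i \<noteq> i}"
      hence "x \<notin> set cs" using comp.hyps(3) by blast
      show "- \<sigma> x (?p x) = - \<sigma> x (q x)" by (simp only: pq[OF \<open>x \<notin> set cs\<close>])
    qed
    finally show ?thesis .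
  qed
  have signp: "sign ?p = sign ?c * sign q"
    by (rule sign_compose[OF permutation_of_cycle]) (use qp in \<open>auto simp: permutation_permutes\<close>)
  have cyc: "sign ?c * (\<Prod>i\<in>{i\<in>set cs. ?c i \<noteq> i}. - \<sigma> i (?c i)) = 1"
  proof (cases "length cs \<ge> 2")
    case False
    show ?thesis
    proof (cases cs)
      case Nil thus ?thesis by simp
    next
      case (Cons x l)
      with False have "l = []" by (cases l) auto
      thus ?thesis using Cons by simp
    qed
  next
    case True
    let ?m = "length cs"
    have dist: "distinct cs" using comp.hyps(2) .
    have rot: "?c (cs ! k) = cs ! ((k + 1) mod ?m)" if "k < ?m" for k
      using cycle_of_list_nth[OF dist that] .
    have ne: "?c (cs ! k) \<noteq> cs ! k" if "k < ?m" for k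
    proof -
      have "(k + 1) mod ?m \<noteq> k"
      proof (cases "k + 1 < ?m")
        case False
        hence "k + 1 = ?m" using that by simp
        thus ?thesis using True by simp
      qed simp
      moreover have "(k + 1) mod ?m < ?m" using True by (intro mod_less_divisor) linarith
      ultimately show ?thesis using rot[OF that] dist that by (simp add: nth_eq_iff_index_eq)
    qed
    have allne: "{i\<in>set cs. ?c i \<noteq> i} = set cs"
      using ne by (auto simp: in_set_conv_nth)
    have arcs: "Ar (cs ! k) (cs ! ((k + 1) mod ?m))" if "k < ?m" for k
    proof -
      have "?p (cs ! k) \<noteq> cs ! k" using pc ne that by simp
      hence "Ar (cs ! k) (?p (cs ! k))" using comp.prems by blast
      thus ?thesis using pc rot that by simp
    qed
    have sd: "sidigraph n Ar \<sigma>" using assms(2) by (simp add: Delta2_def)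
    have "set cs \<subseteq> {0..<n}"
    proof
      fix x assume "x \<in> set cs"
      then obtain k where k: "k < ?m" "x = cs ! k" by (auto simp: in_set_conv_nth)
      show "x \<in> {0..<n}" using arcs[OF k(1)] sd k unfolding sidigraph_def by auto
    qed
    hence dc: "directed_cycle n Ar cs" unfolding directed_cycle_def using True dist arcs by auto
    hence cs1: "cycle_sign \<sigma> cs = -1" using assms(2) by (simp add: Delta2_def)
    have "(\<Prod>i\<in>set cs. - \<sigma> i (?c i)) = (\<Prod>k<?m. - \<sigma> (cs ! k) (?c (cs ! k)))"
    proof -
      have "set cs = (\<lambda>k. cs ! k) ` {..<?m}" by (auto simp: in_set_conv_nth)
      moreover have "inj_on (\<lambda>k. cs ! k) {..<?m}" using dist by (simp add: inj_on_def nth_eq_iff_index_eq)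
      ultimately show ?thesis by (simp add: prod.reindex)
    qed
    also have "\<dots> = (\<Prod>k<?m. - \<sigma> (cs ! k) (cs ! ((k + 1) mod ?m)))"
      using rot by (intro prod.cong) auto
    also have "\<dots> = (-1) ^ ?m * cycle_sign \<sigma> cs"
      unfolding cycle_sign_def by (simp add: prod_uminus)
    finally have "(\<Prod>i\<in>set cs. - \<sigma> i (?c i)) = - ((-1) ^ ?m)" using cs1 by simp
    moreover have "sign ?c = (-1) ^ (?m - 1)" using sign_cycle_of_list[OF dist] .
    moreover have "(-1::int) ^ (?m - 1) * (- ((-1) ^ ?m)) = 1"
    proof -
      obtain j where j: "?m = Suc j" using True by (cases ?m) auto
      show ?thesis unfolding j by (simp flip: power_add mult_2)
    qed
    ultimately show ?thesis using allne by simp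
  qed
  have "sign ?p * (\<Prod>i\<in>{i\<in>set cs \<union> I. ?p i \<noteq> i}. - \<sigma> i (?p i)) =
     (sign ?c * (\<Prod>i\<in>{i\<in>set cs. ?c i \<noteq> i}. - \<sigma> i (?c i))) * (sign q * (\<Prod>i\<in>{i\<in>I. q i \<noteq> i}. - \<sigma> i (q i)))"
    unfolding signp prodsplit by (simp only: mult_ac)
  thus ?case using IH cyc by (simp add: o_def)
qed



lemma supp_even:
  assumes D: "Delta2 n Ar \<sigma>" and p: "p permutes {0..<n}" and g: "\<forall>i<n. p i \<noteq> i \<longrightarrow> Ar i (p i)"
  shows "even (card {i\<in>{0..<n}. p i \<noteq> i})"
proof -
  from D have "bipartite_underlying n Ar" by (simp add: Delta2_def)
  then obtain X where "X \<subseteq> {0..<n}" and X0: "\<forall>u v. Ar u v \<longrightarrow> (u \<in> X \<longleftrightarrow> v \<notin> X)"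
    unfolding bipartite_underlying_def by blast
  have X: "u \<in> X \<longleftrightarrow> v \<notin> X" if "Ar u v" for u v using X0 that by blast
  let ?U = "{i\<in>{0..<n}. p i \<noteq> i}"
  have inj: "inj p" using permutes_inj[OF p] .
  have inU: "p i \<in> ?U" if "i \<in> ?U" for i
  proof -
    have "p i \<in> {0..<n}" using that permutes_in_image[OF p] by auto
    moreover have "p (p i) \<noteq> p i" using that inj by (auto dest: injD)
    ultimately show ?thesis by simp
  qed
  have arc: "Ar i (p i)" if "i \<in> ?U" for i using that g by auto
  have fin: "finite ?U" by simp
  have inj1: "inj_on p (?U \<inter> X)" by (rule inj_on_subset[OF inj]) simp
  have img1: "p ` (?U \<inter> X) \<subseteq> ?U - X"
  proof
    fix y assume "y \<in> p ` (?U \<inter> X)"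
    then obtain i where i: "i \<in> ?U" "i \<in> X" "y = p i" by blast
    have "p i \<notin> X" using X[OF arc[OF i(1)]] i(2) by simp
    thus "y \<in> ?U - X" using inU[OF i(1)] i(3) by simp
  qed
  have inj2: "inj_on p (?U - X)" by (rule inj_on_subset[OF inj]) simp
  have img2: "p ` (?U - X) \<subseteq> ?U \<inter> X"
  proof
    fix y assume "y \<in> p ` (?U - X)"
    then obtain i where i: "i \<in> ?U" "i \<notin> X" "y = p i" by blast
    have "p i \<in> X" using X[OF arc[OF i(1)]] i(2) by simp
    thus "y \<in> ?U \<inter> X" using inU[OF i(1)] i(3) by simp
  qed
  have 1: "card (?U \<inter> X) \<le> card (?U - X)"
    by (rule card_inj_on_le[OF inj1 img1]) simp
  have 2: "card (?U - X) \<le> card (?U \<inter> X)"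
    by (rule card_inj_on_le[OF inj2 img2]) simp
  have "card ?U = card (?U \<inter> X) + card (?U - X)"
  proof -
    have "?U = (?U \<inter> X) \<union> (?U - X)" by blast
    hence "card ?U = card ((?U \<inter> X) \<union> (?U - X))" by simp
    also have "\<dots> = card (?U \<inter> X) + card (?U - X)" by (rule card_Un_disjoint) auto
    finally show ?thesis .
  qed
  thus ?thesis using 1 2 by presburger
qed

lemma entry_char:
  assumes "i < n" "j < n"
  shows "(- char_matrix (adj_matrix n Ar \<sigma>) t) $$ (i, j) =
         (if i = j then t else 0) - (if Ar i j then of_int (\<sigma> i j) else 0)"
  using assms by (simp add: char_matrix_def adj_matrix_def)

lemma prod_good:
  assumes D: "Delta2 n Ar \<sigma>" and p: "p permutes {0..<n}" and g: "\<forall>i<n. p i \<noteq> i \<longrightarrow> Ar i (p i)"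
  fixes t :: complex
  shows "signof p * (\<Prod>i=0..<n. (- char_matrix (adj_matrix n Ar \<sigma>) t) $$ (i, p i)) =
         t ^ (n - card {i\<in>{0..<n}. p i \<noteq> i})"
proof -
  have sd: "sidigraph n Ar \<sigma>" using D by (simp add: Delta2_def)
  have noloop: "\<not> Ar i i" for i using sd unfolding sidigraph_def by blast
  let ?U = "{i\<in>{0..<n}. p i \<noteq> i}"
  have pin: "p i < n" if "i < n" for i using permutes_in_image[OF p] that by simp
  have "(\<Prod>i=0..<n. (- char_matrix (adj_matrix n Ar \<sigma>) t) $$ (i, p i)) =
        (\<Prod>i=0..<n. if p i = i then t else - of_int (\<sigma> i (p i)))"
  proof (rule prod.cong[OF refl])
    fix i assume "i \<in> {0..<n}"
    hence i: "i < n" by simp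
    show "(- char_matrix (adj_matrix n Ar \<sigma>) t) $$ (i, p i) = (if p i = i then t else - of_int (\<sigma> i (p i)))"
      using entry_char[OF i pin[OF i], of Ar \<sigma> t] noloop[of i] g i by auto
  qed
  also have "\<dots> = (\<Prod>i\<in>{0..<n} \<inter> {i. p i = i}. t) * (\<Prod>i\<in>{0..<n} \<inter> - {i. p i = i}. - of_int (\<sigma> i (p i)))"
    by (rule prod.If_cases) simp
  also have "{0..<n} \<inter> - {i. p i = i} = ?U" by auto
  also have "card ({0..<n} \<inter> {i. p i = i}) = n - card ?U"
  proof -
    have "{0..<n} \<inter> {i. p i = i} = {0..<n} - ?U" by auto
    moreover have "card ({0..<n} - ?U) = n - card ?U" by (subst card_Diff_subset) auto
    ultimately show ?thesis by simp
  qed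
  hence "(\<Prod>i\<in>{0..<n} \<inter> {i. p i = i}. t) = t ^ (n - card ?U)" by simp
  finally have eq: "(\<Prod>i=0..<n. (- char_matrix (adj_matrix n Ar \<sigma>) t) $$ (i, p i)) =
      t ^ (n - card ?U) * of_int (\<Prod>i\<in>?U. - \<sigma> i (p i))" by simp
  have cd: "cycle_decomp {0..<n} p" using cycle_decomposition[OF p] by simp
  have g': "\<forall>i. p i \<noteq> i \<longrightarrow> Ar i (p i)"
  proof (intro allI impI)
    fix i assume "p i \<noteq> i"
    hence "i \<in> {0..<n}" using permutes_not_in[OF p] by blast
    thus "Ar i (p i)" using g \<open>p i \<noteq> i\<close> by simp
  qed
  have "sign p * (\<Prod>i\<in>?U. - \<sigma> i (p i)) = 1" using decomp_sign[OF cd D g'] by simp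
  hence "(of_int (sign p) :: complex) * of_int (\<Prod>i\<in>?U. - \<sigma> i (p i)) = 1"
    by (metis of_int_1 of_int_mult)
  thus ?thesis unfolding eq by (simp add: mult.left_commute)
qed

lemma prod_bad:
  assumes "i < n" "p i \<noteq> i" "\<not> Ar i (p i)" "p permutes {0..<n}"
  shows "(\<Prod>i=0..<n. (- char_matrix (adj_matrix n Ar \<sigma>) t) $$ (i, p i)) = 0"
proof (rule prod_zero)
  have "p i < n" using permutes_in_image[OF assms(4)] assms(1) by simp
  thus "\<exists>a\<in>{0..<n}. (- char_matrix (adj_matrix n Ar \<sigma>) t) $$ (a, p a) = 0"
    using assms entry_char[OF assms(1), of "p i" Ar \<sigma> t] by (intro bexI[of _ i]) auto
qed simp

lemma charpoly_eval:
  fixes t :: complex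
  assumes D: "Delta2 n Ar \<sigma>"
  shows "poly (char_poly (adj_matrix n Ar \<sigma>)) t =
     (\<Sum>p\<in>{p. p permutes {0..<n} \<and> (\<forall>i<n. p i \<noteq> i \<longrightarrow> Ar i (p i))}. t ^ (n - card {i\<in>{0..<n}. p i \<noteq> i}))"
proof -
  let ?A = "adj_matrix n Ar \<sigma>"
  have A: "?A \<in> carrier_mat n n" by (simp add: adj_matrix_def)
  have "poly (char_poly ?A) t = det (- char_matrix ?A t)" by (rule char_poly_matrix[OF A])
  also have "\<dots> = (\<Sum>p\<in>{p. p permutes {0..<n}}. signof p * (\<Prod>i=0..<n. (- char_matrix ?A t) $$ (i, p i)))"
    unfolding det_def using A by (simp add: char_matrix_def)
  also have "\<dots> = (\<Sum>p\<in>{p. p permutes {0..<n}}. if (\<forall>i<n. p i \<noteq> i \<longrightarrow> Ar i (p i))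
        then t ^ (n - card {i\<in>{0..<n}. p i \<noteq> i}) else 0)"
  proof (rule sum.cong[OF refl])
    fix p assume "p \<in> {p. p permutes {0..<n}}"
    hence p: "p permutes {0..<n}" by simp
    show "signof p * (\<Prod>i=0..<n. (- char_matrix ?A t) $$ (i, p i)) = (if (\<forall>i<n. p i \<noteq> i \<longrightarrow> Ar i (p i))
        then t ^ (n - card {i\<in>{0..<n}. p i \<noteq> i}) else 0)"
    proof (cases "\<forall>i<n. p i \<noteq> i \<longrightarrow> Ar i (p i)")
      case True thus ?thesis using prod_good[OF D p True] by simp
    next
      case False
      then obtain i where i: "i < n" "p i \<noteq> i" "\<not> Ar i (p i)" by blast
      show ?thesis unfolding prod_bad[of i n p Ar \<sigma> t, OF i p] if_not_P[OF False] by simp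
    qed
  qed
  also have "\<dots> = (\<Sum>p\<in>{p \<in> {p. p permutes {0..<n}}. (\<forall>i<n. p i \<noteq> i \<longrightarrow> Ar i (p i))}. t ^ (n - card {i\<in>{0..<n}. p i \<noteq> i}))"
    by (rule sum.inter_filter[symmetric]) (simp add: finite_permutations)
  finally show ?thesis by simp
qed


lemma supp_of_linear:
  assumes D: "Delta2 n Ar \<sigma>" and "U \<subseteq> {0..<n}" "f permutes U" "\<forall>u\<in>U. Ar u (f u)"
  shows "U = {i\<in>{0..<n}. f i \<noteq> i}"
proof -
  have sd: "sidigraph n Ar \<sigma>" using D by (simp add: Delta2_def)
  have noloop: "\<not> Ar i i" for i using sd unfolding sidigraph_def by blast
  have "f u \<noteq> u" if "u \<in> U" for u using assms(4) that noloop by metis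
  moreover have "f u = u" if "u \<notin> U" for u using permutes_not_in[OF assms(3) that] .
  ultimately show ?thesis using assms(2) by auto
qed

lemma num_linear_card:
  assumes D: "Delta2 n Ar \<sigma>"
  shows "card {p. (p permutes {0..<n} \<and> (\<forall>i<n. p i \<noteq> i \<longrightarrow> Ar i (p i))) \<and> card {i\<in>{0..<n}. p i \<noteq> i} = k}
         = num_linear n Ar k"
proof -
  let ?L = "{(U, f). U \<subseteq> {0..<n} \<and> card U = k \<and> f permutes U \<and> (\<forall>u \<in> U. Ar u (f u))}"
  let ?B = "{p. (p permutes {0..<n} \<and> (\<forall>i<n. p i \<noteq> i \<longrightarrow> Ar i (p i))) \<and> card {i\<in>{0..<n}. p i \<noteq> i} = k}"
  have Ueq: "U = {i\<in>{0..<n}. f i \<noteq> i}" if "(U, f) \<in> ?L" for U f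
    using supp_of_linear[OF D, of U f] that by auto
  have inj: "inj_on snd ?L"
  proof (rule inj_onI)
    fix x y assume x: "x \<in> ?L" and y: "y \<in> ?L" and e: "snd x = snd y"
    obtain U f where xx: "x = (U, f)" by (cases x)
    obtain V g where yy: "y = (V, g)" by (cases y)
    have "U = V" using Ueq[of U f] Ueq[of V g] x y e xx yy by simp
    thus "x = y" using e xx yy by simp
  qed
  have img: "snd ` ?L = ?B"
  proof
    show "snd ` ?L \<subseteq> ?B"
    proof
      fix p assume "p \<in> snd ` ?L"
      then obtain U where U: "(U, p) \<in> ?L" by force
      hence Us: "U \<subseteq> {0..<n}" "card U = k" "p permutes U" "\<forall>u\<in>U. Ar u (p u)" by auto
      have "p permutes {0..<n}" using permutes_subset[OF Us(3) Us(1)] .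
      moreover have "\<forall>i<n. p i \<noteq> i \<longrightarrow> Ar i (p i)"
      proof (intro allI impI)
        fix i assume "i < n" "p i \<noteq> i"
        hence "i \<in> U" using permutes_not_in[OF Us(3)] by blast
        thus "Ar i (p i)" using Us(4) by blast
      qed
      moreover have "card {i\<in>{0..<n}. p i \<noteq> i} = k" using Ueq[OF U] Us(2) by simp
      ultimately show "p \<in> ?B" by simp
    qed
  next
    show "?B \<subseteq> snd ` ?L"
    proof
      fix p assume "p \<in> ?B"
      hence p: "p permutes {0..<n}" "\<forall>i<n. p i \<noteq> i \<longrightarrow> Ar i (p i)" "card {i\<in>{0..<n}. p i \<noteq> i} = k"
        by auto
      let ?U = "{i\<in>{0..<n}. p i \<noteq> i}"
      have "p permutes ?U"
        unfolding permutes_def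
      proof (intro conjI allI impI)
        fix x assume "x \<notin> ?U"
        thus "p x = x" using permutes_not_in[OF p(1)] by auto
      next
        fix y show "\<exists>!x. p x = y" using p(1) unfolding permutes_def by blast
      qed
      hence inL: "(?U, p) \<in> ?L" using p by auto
      show "p \<in> snd ` ?L"
      proof (rule image_eqI)
        show "p = snd (?U, p)" by simp
        show "(?U, p) \<in> ?L" by (rule inL)
      qed
    qed
  qed
  have "num_linear n Ar k = card ?L" unfolding num_linear_def by simp
  also have "\<dots> = card (snd ` ?L)" by (rule card_image[OF inj, symmetric])
  also have "\<dots> = card ?B" using img by simp
  finally show ?thesis by simp
qed

lemma charpoly_formula:
  fixes t :: complex
  assumes D: "Delta2 n Ar \<sigma>"
  shows "poly (char_poly (adj_matrix n Ar \<sigma>)) t =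
     t ^ n + (\<Sum>j = 1..n div 2. of_nat (num_linear n Ar (2 * j)) * t ^ (n - 2 * j))"
proof -
  define PG where "PG = {p. p permutes {0..<n} \<and> (\<forall>i<n. p i \<noteq> i \<longrightarrow> Ar i (p i))}"
  define s where "s = (\<lambda>p. card {i\<in>{0..<n}. p i \<noteq> i})"
  define T where "T = insert 0 ((\<lambda>j. 2 * j) ` {1..n div 2})"
  have finPG: "finite PG" unfolding PG_def
    by (rule finite_subset[OF _ finite_permutations[of "{0..<n}"]]) auto
  have finT: "finite T" unfolding T_def by simp
  have sT: "s ` PG \<subseteq> T"
  proof
    fix y assume "y \<in> s ` PG"
    then obtain p where p: "p \<in> PG" "y = s p" by blast
    have ev: "even y" using supp_even[OF D, of p] p unfolding PG_def s_def by auto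
    have le: "y \<le> n" using p unfolding s_def by (auto intro: order.trans[OF card_mono[of "{0..<n}"]])
    show "y \<in> T"
    proof (cases "y = 0")
      case True thus ?thesis unfolding T_def by simp
    next
      case False
      have "y = 2 * (y div 2)" using ev by simp
      moreover have "y div 2 \<in> {1..n div 2}" using False ev le by auto
      ultimately show ?thesis unfolding T_def by blast
    qed
  qed
  have "poly (char_poly (adj_matrix n Ar \<sigma>)) t = (\<Sum>p\<in>PG. t ^ (n - s p))"
    unfolding PG_def s_def by (rule charpoly_eval[OF D])
  also have "\<dots> = (\<Sum>y\<in>T. \<Sum>p\<in>{p. p \<in> PG \<and> s p = y}. t ^ (n - s p))"
    by (rule sum.group[OF finPG finT sT, symmetric])
  also have "\<dots> = (\<Sum>y\<in>T. of_nat (num_linear n Ar y) * t ^ (n - y))"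
  proof (rule sum.cong[OF refl])
    fix y assume "y \<in> T"
    have "(\<Sum>p\<in>{p. p \<in> PG \<and> s p = y}. t ^ (n - s p)) = (\<Sum>p\<in>{p. p \<in> PG \<and> s p = y}. t ^ (n - y))"
      by (rule sum.cong) auto
    also have "\<dots> = of_nat (card {p. p \<in> PG \<and> s p = y}) * t ^ (n - y)" by simp
    also have "card {p. p \<in> PG \<and> s p = y} = num_linear n Ar y"
      using num_linear_card[OF D, of y] unfolding PG_def s_def by simp
    finally show "(\<Sum>p\<in>{p. p \<in> PG \<and> s p = y}. t ^ (n - s p)) = of_nat (num_linear n Ar y) * t ^ (n - y)" .
  qed
  also have "\<dots> = of_nat (num_linear n Ar 0) * t ^ n + (\<Sum>y\<in>(\<lambda>j. 2 * j) ` {1..n div 2}. of_nat (num_linear n Ar y) * t ^ (n - y))"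
    unfolding T_def by (subst sum.insert) auto
  also have "(\<Sum>y\<in>(\<lambda>j. 2 * j) ` {1..n div 2}. of_nat (num_linear n Ar y) * t ^ (n - y)) =
      (\<Sum>j = 1..n div 2. of_nat (num_linear n Ar (2 * j)) * t ^ (n - 2 * j))"
    by (subst sum.reindex) (auto simp: inj_on_def)
  also have "num_linear n Ar 0 = 1"
  proof -
    have "{p. p \<in> PG \<and> s p = 0} = {id}"
    proof
      show "{p. p \<in> PG \<and> s p = 0} \<subseteq> {id}"
      proof
        fix p assume "p \<in> {p. p \<in> PG \<and> s p = 0}"
        hence p: "p permutes {0..<n}" "card {i\<in>{0..<n}. p i \<noteq> i} = 0" unfolding PG_def s_def by auto
        have "{i\<in>{0..<n}. p i \<noteq> i} = {}" using p(2) by simp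
        hence "p x = x" for x using permutes_not_in[OF p(1), of x] by auto
        thus "p \<in> {id}" by auto
      qed
    next
      show "{id} \<subseteq> {p. p \<in> PG \<and> s p = 0}" unfolding PG_def s_def by (auto simp: permutes_id)
    qed
    hence "card {p. p \<in> PG \<and> s p = 0} = 1" by simp
    thus ?thesis using num_linear_card[OF D, of 0] unfolding PG_def s_def by simp
  qed
  finally show ?thesis by simp
qed



lemma prod_list_map_mult_const:
  "(\<Prod>z\<leftarrow>zs. c * g z) = (c :: 'a :: comm_monoid_mult) ^ length zs * (\<Prod>z\<leftarrow>zs. g z)"
  by (induction zs) (simp_all add: mult_ac)

lemma P_identity:
  fixes zs :: "complex list" and c :: "nat \<Rightarrow> real" and x :: real
  assumes len: "length zs = n"
    and ph: "\<And>t. (\<Prod>z\<leftarrow>zs. t - z) = t ^ n + (\<Sum>j = 1..n div 2. of_real (c j) * t ^ (n - 2 * j))"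
  shows "(\<Prod>z\<leftarrow>zs. 1 + \<i> * of_real x * z) =
         of_real (1 + (\<Sum>j = 1..n div 2. (-1) ^ j * c j * x ^ (2 * j)))"
proof (cases "x = 0")
  case True
  have 1: "(\<Prod>z\<leftarrow>zs. 1 + \<i> * of_real x * z) = 1" using True by (induction zs) auto
  have 2: "(\<Sum>j = 1..n div 2. (-1) ^ j * c j * x ^ (2 * j)) = 0"
    using True by (intro sum.neutral) (auto simp: power_0_left)
  show ?thesis unfolding 1 2 by simp
next
  case False
  define t where "t = \<i> / of_real x"
  define m where "m = - \<i> * of_real x"
  have mt: "m * t = 1" using False unfolding m_def t_def by (simp add: field_simps)
  have "(\<Prod>z\<leftarrow>zs. 1 + \<i> * of_real x * z) = (\<Prod>z\<leftarrow>zs. m * (t - z))"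
  proof -
    have "1 + \<i> * of_real x * z = m * (t - z)" for z
    proof -
      have "m * (t - z) = m * t - m * z" by (simp add: algebra_simps)
      also have "\<dots> = 1 - m * z" using mt by simp
      also have "\<dots> = 1 + \<i> * of_real x * z" unfolding m_def by simp
      finally show ?thesis by simp
    qed
    thus ?thesis by simp
  qed
  also have "\<dots> = m ^ n * (\<Prod>z\<leftarrow>zs. t - z)" by (simp add: prod_list_map_mult_const len)
  also have "\<dots> = (m * t) ^ n + (\<Sum>j = 1..n div 2. of_real (c j) * (m ^ n * t ^ (n - 2 * j)))"
    by (simp add: ph algebra_simps sum_distrib_left power_mult_distrib)
  finally have main: "(\<Prod>z\<leftarrow>zs. 1 + \<i> * of_real x * z) = (m * t) ^ n + (\<Sum>j = 1..n div 2. of_real (c j) * (m ^ n * t ^ (n - 2 * j)))" .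
  have sumeq: "(\<Sum>j = 1..n div 2. of_real (c j) * (m ^ n * t ^ (n - 2 * j))) =
             (\<Sum>j = 1..n div 2. of_real ((-1) ^ j * c j * x ^ (2 * j)))"
  proof (rule sum.cong[OF refl])
    fix j assume "j \<in> {1..n div 2}"
    hence nj: "n = 2 * j + (n - 2 * j)" by auto
    have "m * m = (\<i> * \<i>) * (complex_of_real x * complex_of_real x)" unfolding m_def by (simp only: mult_ac mult_minus_left mult_minus_right minus_minus)
    hence m2: "m * m = - (complex_of_real x * complex_of_real x)" by simp
    have e1: "m ^ n = m ^ (2 * j) * m ^ (n - 2 * j)" by (subst power_add[symmetric]) (simp only: nj[symmetric])
    have e2: "m ^ (n - 2 * j) * t ^ (n - 2 * j) = 1" by (simp only: power_mult_distrib[symmetric] mt power_one)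
    have e3: "m ^ (2 * j) = (m * m) ^ j" by (simp only: power_mult power2_eq_square)
    have e4: "(m * m) ^ j = (- 1) ^ j * (complex_of_real x) ^ (2 * j)"
      unfolding m2 power_mult power2_eq_square by (rule power_minus)
    have "m ^ n * t ^ (n - 2 * j) = m ^ (2 * j) * (m ^ (n - 2 * j) * t ^ (n - 2 * j))"
      unfolding e1 by (simp only: mult.assoc)
    hence "m ^ n * t ^ (n - 2 * j) = (- 1) ^ j * (complex_of_real x) ^ (2 * j)"
      unfolding e2 e3 e4 by simp
    thus "of_real (c j) * (m ^ n * t ^ (n - 2 * j)) = of_real ((-1) ^ j * c j * x ^ (2 * j))"
      by simp
  qed
  show ?thesis unfolding main sumeq mt by simp
qed

lemma energy_and_poly:
  fixes n Ar \<sigma>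
  defines "A \<equiv> adj_matrix n Ar \<sigma>"
  shows "\<exists>zs. length zs = n \<and> sidi_energy n Ar \<sigma> = (\<Sum>z\<leftarrow>zs. \<bar>Re z\<bar>) \<and>
     (\<forall>t. poly (char_poly A) t = (\<Prod>z\<leftarrow>zs. t - z))"
proof -
  have Ac: "A \<in> carrier_mat n n" unfolding A_def by (simp add: adj_matrix_def)
  obtain zs where zs: "char_poly A = (\<Prod>a\<leftarrow>zs. [:- a, 1:])" "length zs = n"
    using char_poly_factorized[OF Ac] by blast
  have pr: "proots (char_poly A) = mset zs"
  proof -
    have "proots (char_poly A) = (\<Sum>p\<leftarrow>map (\<lambda>a. [:- a, 1:]) zs. proots p)"
      unfolding zs(1) by (subst proots_prod_list[symmetric]) auto
    also have "\<dots> = mset zs" by (induction zs) auto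
    finally show ?thesis .
  qed
  have "sidi_energy n Ar \<sigma> = (\<Sum>z\<leftarrow>zs. \<bar>Re z\<bar>)"
  proof -
    have "(\<Sum>z\<in>#mset zs. \<bar>Re z\<bar>) = (\<Sum>z\<leftarrow>zs. \<bar>Re z\<bar>)" for zs :: "complex list"
      by (induction zs) auto
    thus ?thesis unfolding sidi_energy_def A_def[symmetric] pr by simp
  qed
  moreover have "poly (char_poly A) t = (\<Prod>z\<leftarrow>zs. t - z)" for t
    unfolding zs(1) by (induction zs) (auto simp: algebra_simps)
  ultimately show ?thesis using zs(2) by blast
qed



definition Gf :: "complex \<Rightarrow> real" where "Gf u = Re (u * Ln u)"
definition wl :: "complex \<Rightarrow> real \<Rightarrow> complex" where "wl z x = 1 + \<i> * of_real x * z"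
definition Ff :: "complex \<Rightarrow> real \<Rightarrow> real" where "Ff z x = - Gf (wl z x) / x - Im z * ln \<bar>x\<bar>"

lemma ln_abs_sq: "ln \<bar>r\<bar> = ln (r ^ 2) / 2" for r :: real
proof (cases "r = 0")
  case False
  have "ln (r ^ 2) = ln (\<bar>r\<bar> ^ 2)" by simp
  also have "\<dots> = 2 * ln \<bar>r\<bar>" using False by (subst ln_realpow) auto
  finally show ?thesis by simp
qed simp

lemma DERIV_ln_abs: "x \<noteq> 0 \<Longrightarrow> ((\<lambda>x. ln \<bar>x\<bar>) has_real_derivative 1 / x) (at x)"
proof -
  assume x: "x \<noteq> 0"
  have "((\<lambda>x. ln (x ^ 2) / 2) has_real_derivative 1 / x) (at x)"
  proof -
    have p: "0 < x * x" using x not_real_square_gt_zero by blast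
    show ?thesis using x p by (auto intro!: derivative_eq_intros simp: field_simps power2_eq_square)
  qed
  thus ?thesis unfolding ln_abs_sq .
qed

lemma DERIV_xlnabs: "r \<noteq> 0 \<Longrightarrow> ((\<lambda>r. r * ln \<bar>r\<bar>) has_real_derivative ln \<bar>r\<bar> + 1) (at r)"
proof -
  assume r: "r \<noteq> 0"
  have "((\<lambda>r. r * ln \<bar>r\<bar>) has_real_derivative 1 * ln \<bar>r\<bar> + (1 / r) * r) (at r)"
    by (rule DERIV_mult[OF DERIV_ident DERIV_ln_abs[OF r]])
  thus ?thesis using r by simp
qed

lemma tendsto_xlnabs: "((\<lambda>r::real. r * ln \<bar>r\<bar>) \<longlongrightarrow> 0) (at 0)"
proof -
  have "((\<lambda>r::real. r * ln \<bar>r\<bar>) \<longlongrightarrow> 0) (at_right 0)" by real_asymp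
  moreover have "((\<lambda>r::real. r * ln \<bar>r\<bar>) \<longlongrightarrow> 0) (at_left 0)" by real_asymp
  ultimately show ?thesis by (simp add: filterlim_at_split)
qed

lemma isCont_xlnabs: "isCont (\<lambda>r::real. r * ln \<bar>r\<bar>) r"
proof (cases "r = 0")
  case True thus ?thesis using tendsto_xlnabs by (simp add: isCont_def)
next
  case False thus ?thesis using DERIV_xlnabs[OF False] DERIV_isCont by blast
qed

lemma Gf_real: "Gf (of_real r) = r * ln \<bar>r\<bar>"
proof (cases "r = 0")
  case False
  have "Gf (of_real r) = r * Re (Ln (of_real r))" unfolding Gf_def by simp
  thus ?thesis using False by simp
qed (simp add: Gf_def)

lemma Gf_1 [simp]: "Gf 1 = 0" unfolding Gf_def by simp

lemma Re_vector_derivative: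
  assumes "(f has_vector_derivative f') (at x)"
  shows "((\<lambda>x. Re (f x)) has_real_derivative Re f') (at x)"
proof -
  have "((\<lambda>x. Re (f x)) has_derivative (\<lambda>h. Re (h *\<^sub>R f'))) (at x)"
    using bounded_linear.has_derivative[OF bounded_linear_Re assms[unfolded has_vector_derivative_def]] .
  moreover have "(\<lambda>h. Re (h *\<^sub>R f')) = (\<lambda>h. Re f' * h)" by (auto simp: fun_eq_iff)
  ultimately show ?thesis by (simp add: has_field_derivative_def)
qed

lemma DERIV_uLnu: "u \<notin> \<real>\<^sub>\<le>\<^sub>0 \<Longrightarrow> ((\<lambda>s. s * Ln s) has_field_derivative (Ln u + 1)) (at u)"
proof -
  assume u: "u \<notin> \<real>\<^sub>\<le>\<^sub>0"
  hence u0: "u \<noteq> 0" by auto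
  have "((\<lambda>s. s * Ln s) has_field_derivative (1 * Ln u + inverse u * u)) (at u)"
    by (rule DERIV_mult[OF DERIV_ident has_field_derivative_Ln[OF u]])
  thus ?thesis using u0 by (simp add: add.commute)
qed

lemma wl_0 [simp]: "wl z 0 = 1" unfolding wl_def by simp
lemma Im_wl: "Im (wl z x) = x * Re z" unfolding wl_def by simp
lemma Re_wl: "Re (wl z x) = 1 - x * Im z" unfolding wl_def by simp

lemma wl_real: "Re z = 0 \<Longrightarrow> wl z x = of_real (1 - x * Im z)"
  by (simp add: complex_eq_iff Im_wl Re_wl)

lemma dG_complex:
  assumes w: "wl z x \<notin> \<real>\<^sub>\<le>\<^sub>0"
  shows "((\<lambda>x. Gf (wl z x)) has_real_derivative (Re (\<i> * z * Ln (wl z x)) - Im z)) (at x)"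
proof -
  let ?g = "\<lambda>s::complex. (1 + \<i> * s * z) * Ln (1 + \<i> * s * z)"
  have "(?g has_field_derivative ((Ln (wl z x) + 1) * (\<i> * z))) (at (of_real x))"
  proof -
    have d1: "((\<lambda>s::complex. 1 + \<i> * s * z) has_field_derivative \<i> * z) (at (of_real x))"
      by (auto intro!: derivative_eq_intros)
    have "1 + \<i> * of_real x * z = wl z x" unfolding wl_def by simp
    hence d2: "((\<lambda>s. s * Ln s) has_field_derivative (Ln (wl z x) + 1)) (at (1 + \<i> * of_real x * z))"
      using DERIV_uLnu[OF w] by simp
    show ?thesis using DERIV_chain2[OF d2 d1] by simp
  qed
  hence "((\<lambda>x. ?g (of_real x)) has_vector_derivative ((Ln (wl z x) + 1) * (\<i> * z))) (at x)"
    by (rule has_vector_derivative_real_field)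
  hence "((\<lambda>x. Re (?g (of_real x))) has_real_derivative Re ((Ln (wl z x) + 1) * (\<i> * z))) (at x)"
    by (rule Re_vector_derivative)
  moreover have "(\<lambda>x. Re (?g (of_real x))) = (\<lambda>x. Gf (wl z x))"
    unfolding Gf_def wl_def by simp
  ultimately have "((\<lambda>x. Gf (wl z x)) has_real_derivative Re ((Ln (wl z x) + 1) * (\<i> * z))) (at x)"
    by simp
  moreover have "Re ((Ln (wl z x) + 1) * (\<i> * z)) = Re (\<i> * z * Ln (wl z x)) - Im z"
    by (simp add: algebra_simps)
  ultimately show ?thesis by (rule DERIV_cong)
qed

lemma dG:
  assumes w: "wl z x \<noteq> 0"
  shows "((\<lambda>x. Gf (wl z x)) has_real_derivative (Re (\<i> * z * Ln (wl z x)) - Im z)) (at x)"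
proof (cases "wl z x \<in> \<real>\<^sub>\<le>\<^sub>0")
  case False thus ?thesis by (rule dG_complex)
next
  case True
  hence "Im (wl z x) = 0" by (auto simp: complex_nonpos_Reals_iff)
  moreover have "x \<noteq> 0" using True by (auto simp: complex_nonpos_Reals_iff)
  ultimately have a: "Re z = 0" by (simp add: Im_wl)
  let ?b = "Im z"
  have eq: "(\<lambda>x. Gf (wl z x)) = (\<lambda>x. (\<lambda>r. r * ln \<bar>r\<bar>) (1 - x * ?b))"
    by (simp only: wl_real[OF a] Gf_real)
  from w have nz: "complex_of_real (1 - x * ?b) \<noteq> 0" unfolding wl_real[OF a] .
  hence r0: "1 - x * ?b \<noteq> 0" by (rule contrapos_nn) simp
  have "((\<lambda>x. (\<lambda>r. r * ln \<bar>r\<bar>) (1 - x * ?b)) has_real_derivative (ln \<bar>1 - x * ?b\<bar> + 1) * (- ?b)) (at x)"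
    by (rule DERIV_chain2[where g="\<lambda>x. 1 - x * Im z", OF DERIV_xlnabs[OF r0]]) (auto intro!: derivative_eq_intros)
  moreover have "Re (\<i> * z * Ln (wl z x)) - Im z = (ln \<bar>1 - x * ?b\<bar> + 1) * (- ?b)"
  proof -
    have iz: "\<i> * z = of_real (- ?b)" using a by (simp add: complex_eq_iff)
    have "Re (\<i> * z * Ln (wl z x)) = - ?b * Re (Ln (wl z x))" unfolding iz by simp
    also have "Re (Ln (wl z x)) = ln \<bar>1 - x * ?b\<bar>"
      unfolding wl_real[OF a] Re_Ln[OF nz] norm_of_real ..
    finally show ?thesis by (simp add: algebra_simps)
  qed
  ultimately show ?thesis unfolding eq by simp
qed



lemma Gf_expand: "Gf (wl z x) = Re (Ln (wl z x)) + x * Re (\<i> * z * Ln (wl z x))"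
proof -
  have "wl z x * Ln (wl z x) = Ln (wl z x) + of_real x * (\<i> * z * Ln (wl z x))"
    unfolding wl_def by (simp add: algebra_simps)
  thus ?thesis unfolding Gf_def by simp
qed

lemma dF:
  assumes x: "x \<noteq> 0" and w: "wl z x \<noteq> 0"
  shows "(Ff z has_real_derivative ln (cmod (wl z x)) / x\<^sup>2) (at x)"
proof -
  let ?Dg = "Re (\<i> * z * Ln (wl z x)) - Im z"
  have d1: "((\<lambda>x. Gf (wl z x)) has_real_derivative ?Dg) (at x)" by (rule dG[OF w])
  have d2: "((\<lambda>x. Gf (wl z x) / x) has_real_derivative (?Dg * x - Gf (wl z x) * 1) / (x * x)) (at x)"
    by (rule DERIV_divide[OF d1 DERIV_ident x])
  have d3: "((\<lambda>x. Im z * ln \<bar>x\<bar>) has_real_derivative Im z * (1 / x)) (at x)"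
    by (rule DERIV_cmult[OF DERIV_ln_abs[OF x]])
  have d4: "((\<lambda>x. - (Gf (wl z x) / x) - Im z * ln \<bar>x\<bar>) has_real_derivative
        - ((?Dg * x - Gf (wl z x) * 1) / (x * x)) - Im z * (1 / x)) (at x)"
    by (rule DERIV_diff[OF DERIV_minus[OF d2] d3])
  have feq: "Ff z = (\<lambda>x. - (Gf (wl z x) / x) - Im z * ln \<bar>x\<bar>)"
    unfolding Ff_def by (auto simp: fun_eq_iff)
  have "- ((?Dg * x - Gf (wl z x) * 1) / (x * x)) - Im z * (1 / x) = Re (Ln (wl z x)) / x\<^sup>2"
    unfolding Gf_expand using x by (simp add: field_simps power2_eq_square)
  also have "Re (Ln (wl z x)) = ln (cmod (wl z x))" using w by simp
  finally show ?thesis unfolding feq using d4 by (rule DERIV_cong[rotated])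
qed

lemma isCont_Gw: "isCont (\<lambda>y. Gf (wl z y)) x"
proof (cases "wl z x = 0")
  case False thus ?thesis using dG[OF False] DERIV_isCont by blast
next
  case True
  hence "x \<noteq> 0" by (auto simp: wl_def)
  moreover have "Im (wl z x) = 0" using True by simp
  ultimately have a: "Re z = 0" by (simp add: Im_wl)
  have eq: "(\<lambda>y. Gf (wl z y)) = (\<lambda>y. (\<lambda>r. r * ln \<bar>r\<bar>) (1 - y * Im z))"
    by (simp only: wl_real[OF a] Gf_real)
  show ?thesis unfolding eq
    by (rule isCont_o2[OF _ isCont_xlnabs]) (intro continuous_intros)
qed

lemma isCont_lnabs: "x \<noteq> 0 \<Longrightarrow> isCont (\<lambda>x::real. ln \<bar>x\<bar>) x"
  using DERIV_ln_abs DERIV_isCont by blast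

lemma isCont_Ff: "x \<noteq> 0 \<Longrightarrow> isCont (Ff z) x"
proof -
  assume x: "x \<noteq> 0"
  have c1: "isCont (\<lambda>y. Gf (wl z y)) x" by (rule isCont_Gw)
  have c2: "isCont (\<lambda>x::real. ln \<bar>x\<bar>) x" by (rule isCont_lnabs[OF x])
  have "isCont (\<lambda>y. - Gf (wl z y) / y - Im z * ln \<bar>y\<bar>) x"
    using c1 c2 x by (intro continuous_intros) auto
  thus ?thesis unfolding Ff_def by simp
qed

lemma lim_small:
  "((\<lambda>e. Ff z (- e) - Ff z e) \<longlongrightarrow> 0) (at_right 0)"
proof -
  define k where "k = (\<lambda>y. Gf (wl z y) + Gf (wl z (- y)))"
  have w0: "wl z 0 \<noteq> 0" by simp
  have da: "((\<lambda>y. Gf (wl z y)) has_real_derivative (- Im z)) (at 0)"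
    using dG[OF w0] by simp
  have db: "((\<lambda>y. Gf (wl z (- y))) has_real_derivative (- Im z) * (- 1)) (at 0)"
  proof -
    have dm: "((\<lambda>y::real. - y) has_real_derivative -1) (at 0)" by (rule DERIV_minus[OF DERIV_ident])
    have da': "((\<lambda>y. Gf (wl z y)) has_real_derivative (- Im z)) (at ((\<lambda>y::real. - y) 0))" using da by simp
    show ?thesis using DERIV_chain2[OF da' dm] by simp
  qed
  have dk: "(k has_real_derivative 0) (at 0)"
    unfolding k_def using DERIV_add[OF da db] by simp
  have k0: "k 0 = 0" unfolding k_def by simp
  have "((\<lambda>y. (k y - k 0) / (y - 0)) \<longlongrightarrow> 0) (at 0)"
    using dk by (simp add: has_field_derivative_iff)
  hence lim: "((\<lambda>y. k y / y) \<longlongrightarrow> 0) (at 0)" using k0 by simp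
  have eq: "Ff z (- e) - Ff z e = k e / e" for e
  proof (cases "e = 0")
    case True thus ?thesis by (simp add: Ff_def)
  next
    case False thus ?thesis unfolding Ff_def k_def by (simp add: field_simps)
  qed
  show ?thesis unfolding eq using tendsto_mono[OF at_le[OF subset_UNIV] lim] by simp
qed



lemma Gf_scale:
  assumes r: "r > 0"
  shows "Gf (of_real r * u) = r * Gf u + r * ln r * Re u"
proof (cases "u = 0")
  case True thus ?thesis by (simp add: Gf_def)
next
  case False
  have "Ln (of_real r * u) = of_real (ln r) + Ln u"
    using Ln_times_of_real[OF r False] by (simp add: Ln_of_real r)
  hence "of_real r * u * Ln (of_real r * u) = of_real r * (u * Ln u) + of_real (r * ln r) * u"
    by (simp add: algebra_simps)
  thus ?thesis unfolding Gf_def by simp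
qed

lemma Gf_pair:
  assumes a: "Re z \<noteq> 0"
  shows "Gf (\<i> * z) + Gf (- (\<i> * z)) = - pi * \<bar>Re z\<bar>"
proof -
  let ?u = "\<i> * z"
  have u0: "?u \<noteq> 0" using a by auto
  have Imu: "Im ?u = Re z" by simp
  show ?thesis
  proof (cases "Re z > 0")
    case True
    have L: "Ln (- ?u) = Ln ?u - \<i> * pi" using Ln_minus[OF u0] True by simp
    have "Gf (- ?u) = Re (- ?u * (Ln ?u - \<i> * pi))" unfolding Gf_def L ..
    also have "- ?u * (Ln ?u - \<i> * pi) = - (?u * Ln ?u) + ?u * (\<i> * pi)" by (simp add: algebra_simps)
    also have "Re (- (?u * Ln ?u) + ?u * (\<i> * pi)) = - Gf ?u + Re (?u * (\<i> * pi))"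
      unfolding Gf_def by (simp only: plus_complex.sel uminus_complex.sel)
    also have "Re (?u * (\<i> * pi)) = - pi * Re z" by simp
    finally show ?thesis using True by simp
  next
    case False
    hence neg: "Re z < 0" using a by simp
    have L: "Ln (- ?u) = Ln ?u + \<i> * pi" using Ln_minus[OF u0] neg by simp
    have "Gf (- ?u) = Re (- ?u * (Ln ?u + \<i> * pi))" unfolding Gf_def L ..
    also have "- ?u * (Ln ?u + \<i> * pi) = - (?u * Ln ?u) - ?u * (\<i> * pi)" by (simp add: algebra_simps)
    also have "Re (- (?u * Ln ?u) - ?u * (\<i> * pi)) = - Gf ?u - Re (?u * (\<i> * pi))"
      unfolding Gf_def by (simp only: minus_complex.sel uminus_complex.sel)
    also have "Re (?u * (\<i> * pi)) = - pi * Re z" by simp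
    finally show ?thesis using neg by simp
  qed
qed

lemma isCont_Gf: "u \<notin> \<real>\<^sub>\<le>\<^sub>0 \<Longrightarrow> isCont Gf u"
proof -
  assume u: "u \<notin> \<real>\<^sub>\<le>\<^sub>0"
  have "isCont (\<lambda>s. s * Ln s) u" using DERIV_uLnu[OF u] DERIV_isCont by blast
  hence "isCont (\<lambda>s. Re (s * Ln s)) u" by (rule isCont_Re)
  thus ?thesis unfolding Gf_def[abs_def] .
qed

lemma large_eq:
  assumes R: "R > 0"
  shows "Ff z R - Ff z (- R) =
    - (Gf (of_real (1 / R) + \<i> * z) + Gf (of_real (1 / R) - \<i> * z)) - 2 * (ln R / R)"
proof -
  have e1: "wl z R = of_real R * (of_real (1 / R) + \<i> * z)"
    unfolding wl_def using R by (simp add: field_simps)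
  have e2: "wl z (- R) = of_real R * (of_real (1 / R) - \<i> * z)"
    unfolding wl_def using R by (simp add: field_simps)
  have "Ff z R - Ff z (- R) = - (Gf (wl z R) + Gf (wl z (- R))) / R"
    unfolding Ff_def using R by (simp add: field_simps)
  also have "\<dots> = - (R * Gf (of_real (1 / R) + \<i> * z) + R * ln R * Re (of_real (1 / R) + \<i> * z)
        + (R * Gf (of_real (1 / R) - \<i> * z) + R * ln R * Re (of_real (1 / R) - \<i> * z))) / R"
    unfolding e1 e2 Gf_scale[OF R] ..
  also have "\<dots> = - (Gf (of_real (1 / R) + \<i> * z) + Gf (of_real (1 / R) - \<i> * z)) - 2 * (ln R / R)"
    using R by (simp add: field_simps)
  finally show ?thesis .
qed

lemma lim_large:
  "((\<lambda>R. Ff z R - Ff z (- R)) \<longlongrightarrow> pi * \<bar>Re z\<bar>) at_top"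
proof -
  have lnR: "((\<lambda>R::real. ln R / R) \<longlongrightarrow> 0) at_top" by (rule ln_x_over_x_tendsto_0)
  have inv: "((\<lambda>R::real. 1 / R) \<longlongrightarrow> 0) at_top" by real_asymp
  have lim_sum: "((\<lambda>R. Gf (of_real (1 / R) + \<i> * z) + Gf (of_real (1 / R) - \<i> * z)) \<longlongrightarrow> - pi * \<bar>Re z\<bar>) at_top"
  proof (cases "Re z = 0")
    case False
    have l1: "((\<lambda>R. of_real (1 / R) + \<i> * z) \<longlongrightarrow> \<i> * z) at_top"
      using tendsto_add[OF tendsto_of_real[OF inv] tendsto_const[of "\<i> * z"]] by simp
    have l2: "((\<lambda>R. of_real (1 / R) - \<i> * z) \<longlongrightarrow> - (\<i> * z)) at_top"
      using tendsto_diff[OF tendsto_of_real[OF inv] tendsto_const[of "\<i> * z"]] by simp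
    have n1: "\<i> * z \<notin> \<real>\<^sub>\<le>\<^sub>0" using False by (auto simp: complex_nonpos_Reals_iff)
    have n2: "- (\<i> * z) \<notin> \<real>\<^sub>\<le>\<^sub>0" using False by (auto simp: complex_nonpos_Reals_iff)
    have "((\<lambda>R. Gf (of_real (1 / R) + \<i> * z) + Gf (of_real (1 / R) - \<i> * z)) \<longlongrightarrow> Gf (\<i> * z) + Gf (- (\<i> * z))) at_top"
      by (intro tendsto_add isCont_tendsto_compose[OF isCont_Gf[OF n1] l1] isCont_tendsto_compose[OF isCont_Gf[OF n2] l2])
    thus ?thesis using Gf_pair[OF False] by simp
  next
    case True
    let ?h = "\<lambda>r::real. r * ln \<bar>r\<bar>"
    have iz: "\<i> * z = of_real (- Im z)" using True by (simp add: complex_eq_iff)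
    have eq: "Gf (of_real (1 / R) + \<i> * z) + Gf (of_real (1 / R) - \<i> * z) = ?h (1 / R - Im z) + ?h (1 / R + Im z)" for R
    proof -
      have "of_real (1 / R) + \<i> * z = of_real (1 / R - Im z)" unfolding iz by simp
      moreover have "of_real (1 / R) - \<i> * z = of_real (1 / R + Im z)" unfolding iz by simp
      ultimately show ?thesis by (simp only: Gf_real)
    qed
    have l1: "((\<lambda>R. 1 / R - Im z) \<longlongrightarrow> 0 - Im z) at_top" by (intro tendsto_intros inv)
    have l2: "((\<lambda>R. 1 / R + Im z) \<longlongrightarrow> 0 + Im z) at_top" by (intro tendsto_intros inv)
    have "((\<lambda>R. ?h (1 / R - Im z) + ?h (1 / R + Im z)) \<longlongrightarrow> ?h (0 - Im z) + ?h (0 + Im z)) at_top"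
      by (intro tendsto_add isCont_tendsto_compose[OF isCont_xlnabs l1] isCont_tendsto_compose[OF isCont_xlnabs l2])
    thus ?thesis unfolding eq using True by simp
  qed
  have "((\<lambda>R. - (Gf (of_real (1 / R) + \<i> * z) + Gf (of_real (1 / R) - \<i> * z)) - 2 * (ln R / R))
      \<longlongrightarrow> - (- pi * \<bar>Re z\<bar>) - 2 * 0) at_top"
    by (intro tendsto_intros lim_sum lnR)
  hence "((\<lambda>R. - (Gf (of_real (1 / R) + \<i> * z) + Gf (of_real (1 / R) - \<i> * z)) - 2 * (ln R / R))
      \<longlongrightarrow> pi * \<bar>Re z\<bar>) at_top" by simp
  moreover have "eventually (\<lambda>R. - (Gf (of_real (1 / R) + \<i> * z) + Gf (of_real (1 / R) - \<i> * z)) - 2 * (ln R / R)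
      = Ff z R - Ff z (- R)) at_top"
    using eventually_gt_at_top[of 0] by eventually_elim (simp add: large_eq)
  ultimately show ?thesis by (rule Lim_transform_eventually)
qed



lemma sum_list_DERIV:
  "(\<And>z. z \<in> set zs \<Longrightarrow> (F z has_real_derivative D z) (at x)) \<Longrightarrow>
   ((\<lambda>x. \<Sum>z\<leftarrow>zs. F z x) has_real_derivative (\<Sum>z\<leftarrow>zs. D z)) (at x)"
proof (induction zs)
  case Nil thus ?case by simp
next
  case (Cons a zs)
  have "((\<lambda>x. F a x + (\<Sum>z\<leftarrow>zs. F z x)) has_real_derivative D a + (\<Sum>z\<leftarrow>zs. D z)) (at x)"
    using Cons by (intro DERIV_add) auto
  thus ?case by simp
qed

lemma sum_list_isCont:
  fixes F :: "'a \<Rightarrow> real \<Rightarrow> real"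
  shows "(\<And>z. z \<in> set zs \<Longrightarrow> isCont (F z) x) \<Longrightarrow> isCont (\<lambda>x. \<Sum>z\<leftarrow>zs. F z x) x"
proof (induction zs)
  case Nil thus ?case by simp
next
  case (Cons a zs)
  have "isCont (\<lambda>x. F a x + (\<Sum>z\<leftarrow>zs. F z x)) x"
    using Cons by (intro isCont_add) auto
  thus ?case by simp
qed

lemma sum_list_tendsto:
  "(\<And>z. z \<in> set zs \<Longrightarrow> ((F z) \<longlongrightarrow> (L z :: real)) G) \<Longrightarrow>
   ((\<lambda>x. \<Sum>z\<leftarrow>zs. F z x) \<longlongrightarrow> (\<Sum>z\<leftarrow>zs. L z)) G"
proof (induction zs)
  case Nil thus ?case by simp
next
  case (Cons a zs)
  have "((\<lambda>x. F a x + (\<Sum>z\<leftarrow>zs. F z x)) \<longlongrightarrow> L a + (\<Sum>z\<leftarrow>zs. L z)) G"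
    using Cons by (intro tendsto_add) auto
  thus ?case by simp
qed

lemma sum_list_div: "(\<Sum>z\<leftarrow>zs. f z / (c::real)) = (\<Sum>z\<leftarrow>zs. f z) / c"
  by (induction zs) (simp_all add: add_divide_distrib)

lemma sum_list_cmult: "(\<Sum>z\<leftarrow>zs. (c::real) * f z) = c * (\<Sum>z\<leftarrow>zs. f z)"
  by (induction zs) (simp_all add: distrib_left)

lemma ln_prod_list:
  "(\<And>z. z \<in> set zs \<Longrightarrow> f z \<noteq> 0) \<Longrightarrow> ln (cmod (\<Prod>z\<leftarrow>zs. f z)) = (\<Sum>z\<leftarrow>zs. ln (cmod (f z)))"
proof (induction zs)
  case Nil thus ?case by simp
next
  case (Cons a zs)
  have a: "cmod (f a) > 0" using Cons.prems by simp
  have "(\<Prod>z\<leftarrow>zs. f z) \<noteq> 0" using Cons.prems by (induction zs) auto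
  hence b: "cmod (\<Prod>z\<leftarrow>zs. f z) > 0" by simp
  have "ln (cmod (\<Prod>z\<leftarrow>a # zs. f z)) = ln (cmod (f a) * cmod (\<Prod>z\<leftarrow>zs. f z))"
    by (simp add: norm_mult)
  also have "\<dots> = ln (cmod (f a)) + ln (cmod (\<Prod>z\<leftarrow>zs. f z))" using a b by (simp add: ln_mult)
  finally show ?case using Cons by simp
qed

lemma wl_zero_set: "{x. wl z x = 0} \<subseteq> {Re (- 1 / (\<i> * z))}"
proof
  fix x assume "x \<in> {x. wl z x = 0}"
  hence e: "1 + \<i> * of_real x * z = 0" unfolding wl_def by simp
  hence nz: "\<i> * z \<noteq> 0" by auto
  have "of_real x * (\<i> * z) = - 1" using e by (simp add: algebra_simps eq_neg_iff_add_eq_0)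
  hence "of_real x = - 1 / (\<i> * z)" using nz by (simp add: field_simps)
  hence "x = Re (- 1 / (\<i> * z))" by (metis Re_complex_of_real)
  thus "x \<in> {Re (- 1 / (\<i> * z))}" by simp
qed

lemma analytic_main:
  fixes zs :: "complex list" and p :: "real \<Rightarrow> real"
  assumes P: "\<And>x. (\<Prod>z\<leftarrow>zs. wl z x) = of_real (p x)"
  shows "((\<lambda>(\<epsilon>, R). (1 / pi) * integral ({-R..-\<epsilon>} \<union> {\<epsilon>..R}) (\<lambda>x. (1 / x\<^sup>2) * ln \<bar>p x\<bar>))
            \<longlongrightarrow> (\<Sum>z\<leftarrow>zs. \<bar>Re z\<bar>)) (at_right 0 \<times>\<^sub>F at_top)"
proof -
  define Ft where "Ft = (\<lambda>x. \<Sum>z\<leftarrow>zs. Ff z x)"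
  define fT where "fT = (\<lambda>x::real. (1 / x\<^sup>2) * ln \<bar>p x\<bar>)"
  define S where "S = (\<Union>z\<in>set zs. {x. wl z x = 0})"
  have finS: "finite S" unfolding S_def
    by (intro finite_UN_I finite_set finite_subset[OF wl_zero_set]) simp
  have deriv: "(Ft has_real_derivative fT x) (at x)" if x: "x \<noteq> 0" "x \<notin> S" for x
  proof -
    have nz: "wl z x \<noteq> 0" if "z \<in> set zs" for z using x(2) that unfolding S_def by blast
    have "(Ft has_real_derivative (\<Sum>z\<leftarrow>zs. ln (cmod (wl z x)) / x\<^sup>2)) (at x)"
      unfolding Ft_def by (rule sum_list_DERIV) (use dF[OF x(1) nz] in blast)
    also have "(\<Sum>z\<leftarrow>zs. ln (cmod (wl z x)) / x\<^sup>2) = ln (cmod (\<Prod>z\<leftarrow>zs. wl z x)) / x\<^sup>2"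
      using ln_prod_list[of zs "\<lambda>z. wl z x", OF nz] by (simp add: sum_list_div)
    also have "\<dots> = fT x" unfolding fT_def P by simp
    finally show ?thesis .
  qed
  have ftc: "(fT has_integral (Ft b - Ft a)) {a..b}" if ab: "a \<le> b" and z: "0 \<notin> {a..b}" for a b
  proof (rule fundamental_theorem_of_calculus_interior_strong[OF finS ab])
    fix x assume "x \<in> {a<..<b} - S"
    hence "x \<noteq> 0" "x \<notin> S" using z by auto
    thus "(Ft has_vector_derivative fT x) (at x)"
      using deriv has_real_derivative_iff_has_vector_derivative by blast
  next
    show "continuous_on {a..b} Ft"
    proof (rule continuous_at_imp_continuous_on, intro ballI)
      fix x assume "x \<in> {a..b}"
      hence "x \<noteq> 0" using z by auto
      thus "isCont Ft x" unfolding Ft_def by (intro sum_list_isCont isCont_Ff)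
    qed
  qed
  have int_eq: "integral ({-R..-\<epsilon>} \<union> {\<epsilon>..R}) fT =
      (\<Sum>z\<leftarrow>zs. Ff z (- \<epsilon>) - Ff z \<epsilon>) + (\<Sum>z\<leftarrow>zs. Ff z R - Ff z (- R))"
    if e: "0 < \<epsilon>" "\<epsilon> < R" for \<epsilon> R
  proof -
    have i1: "(fT has_integral (Ft (- \<epsilon>) - Ft (- R))) {-R..-\<epsilon>}" using e by (intro ftc) auto
    have i2: "(fT has_integral (Ft R - Ft \<epsilon>)) {\<epsilon>..R}" using e by (intro ftc) auto
    have "{-R..-\<epsilon>} \<inter> {\<epsilon>..R} = {}" using e by auto
    hence "(fT has_integral ((Ft (- \<epsilon>) - Ft (- R)) + (Ft R - Ft \<epsilon>))) ({-R..-\<epsilon>} \<union> {\<epsilon>..R})"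
      using has_integral_Un[OF i1 i2] by simp
    hence "integral ({-R..-\<epsilon>} \<union> {\<epsilon>..R}) fT = (Ft (- \<epsilon>) - Ft (- R)) + (Ft R - Ft \<epsilon>)"
      by (rule integral_unique)
    also have "\<dots> = (\<Sum>z\<leftarrow>zs. Ff z (- \<epsilon>) - Ff z \<epsilon>) + (\<Sum>z\<leftarrow>zs. Ff z R - Ff z (- R))"
      unfolding Ft_def by (simp add: sum_list_subtractf)
    finally show ?thesis .
  qed
  define A where "A = (\<lambda>\<epsilon>. \<Sum>z\<leftarrow>zs. Ff z (- \<epsilon>) - Ff z \<epsilon>)"
  define B where "B = (\<lambda>R. \<Sum>z\<leftarrow>zs. Ff z R - Ff z (- R))"
  have limA: "(A \<longlongrightarrow> (\<Sum>z\<leftarrow>zs. 0)) (at_right 0)"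
    unfolding A_def by (rule sum_list_tendsto) (rule lim_small)
  have limB: "(B \<longlongrightarrow> (\<Sum>z\<leftarrow>zs. pi * \<bar>Re z\<bar>)) at_top"
    unfolding B_def by (rule sum_list_tendsto) (rule lim_large)
  have lA: "((\<lambda>q. A (fst q)) \<longlongrightarrow> 0) (at_right 0 \<times>\<^sub>F at_top)"
    using filterlim_compose[OF limA filterlim_fst] by simp
  have lB: "((\<lambda>q. B (snd q)) \<longlongrightarrow> pi * (\<Sum>z\<leftarrow>zs. \<bar>Re z\<bar>)) (at_right 0 \<times>\<^sub>F at_top)"
    using filterlim_compose[OF limB filterlim_snd] by (simp add: sum_list_cmult)
  have "((\<lambda>q. (1 / pi) * (A (fst q) + B (snd q))) \<longlongrightarrow> (1 / pi) * (0 + pi * (\<Sum>z\<leftarrow>zs. \<bar>Re z\<bar>)))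
      (at_right 0 \<times>\<^sub>F at_top)"
    by (intro tendsto_intros lA lB)
  hence lim: "((\<lambda>q. (1 / pi) * (A (fst q) + B (snd q))) \<longlongrightarrow> (\<Sum>z\<leftarrow>zs. \<bar>Re z\<bar>)) (at_right 0 \<times>\<^sub>F at_top)"
    by simp
  have ev1: "eventually (\<lambda>\<epsilon>::real. 0 < \<epsilon> \<and> \<epsilon> < 1) (at_right 0)"
    using eventually_at_right_real[of 0 1] by simp
  have ev2: "eventually (\<lambda>R::real. 1 < R) at_top" by (rule eventually_gt_at_top)
  have "eventually (\<lambda>q. (1 / pi) * (A (fst q) + B (snd q)) =
      (\<lambda>(\<epsilon>, R). (1 / pi) * integral ({-R..-\<epsilon>} \<union> {\<epsilon>..R}) fT) q) (at_right 0 \<times>\<^sub>F at_top)"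
    using eventually_prodI[OF ev1 ev2]
  proof eventually_elim
    case (elim q)
    obtain \<epsilon> R where q: "q = (\<epsilon>, R)" by (cases q)
    have "0 < \<epsilon>" "\<epsilon> < R" using elim q by auto
    thus ?case unfolding q A_def B_def using int_eq by simp
  qed
  from Lim_transform_eventually[OF lim this] show ?thesis unfolding fT_def .
qed


theorem theorem3p2:
  fixes n :: nat and Ar :: "nat \<Rightarrow> nat \<Rightarrow> bool" and \<sigma> :: "nat \<Rightarrow> nat \<Rightarrow> int"
  assumes "Delta2 n Ar \<sigma>"
  defines "f \<equiv> (\<lambda>z::real. (1 / z\<^sup>2) *
              ln \<bar>1 + (\<Sum>j = 1..n div 2. (-1) ^ j * real (num_linear n Ar (2 * j)) * z ^ (2 * j))\<bar>)"
  shows "((\<lambda>(\<epsilon>, R). (1 / pi) * integral ({-R..-\<epsilon>} \<union> {\<epsilon>..R}) f)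
            \<longlongrightarrow> sidi_energy n Ar \<sigma>) (at_right 0 \<times>\<^sub>F at_top)"
proof -
  obtain zs where zs: "length zs = n" "sidi_energy n Ar \<sigma> = (\<Sum>z\<leftarrow>zs. \<bar>Re z\<bar>)"
      "\<And>t. poly (char_poly (adj_matrix n Ar \<sigma>)) t = (\<Prod>z\<leftarrow>zs. t - z)"
    using energy_and_poly[of n Ar \<sigma>] by blast
  define c where "c = (\<lambda>j. real (num_linear n Ar (2 * j)))"
  have ph: "(\<Prod>z\<leftarrow>zs. t - z) = t ^ n + (\<Sum>j = 1..n div 2. of_real (c j) * t ^ (n - 2 * j))" for t
    using charpoly_formula[OF assms(1), of t] zs(3)[of t] unfolding c_def by simp
  define p where "p = (\<lambda>x::real. 1 + (\<Sum>j = 1..n div 2. (-1) ^ j * c j * x ^ (2 * j)))"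
  have P: "(\<Prod>z\<leftarrow>zs. wl z x) = of_real (p x)" for x
    unfolding wl_def p_def by (rule P_identity[OF zs(1) ph])
  have feq: "f = (\<lambda>x. (1 / x\<^sup>2) * ln \<bar>p x\<bar>)" unfolding f_def p_def c_def ..
  show ?thesis unfolding feq zs(2) by (rule analytic_main[OF P])
qed

end
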